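(* Let $P$ be a Young diagram contained in a $\delta\times\delta$ square and $C_P\subset Gr(\delta,V)$ the corresponding Schubert cell. Then $C_P\cap\overline{JF}\neq\emptyset$ if and only if $P$ is simultaneously an $m$-core and an $n$-core. In that case all $W\in C_P$ have the same set $\Delta(W)=:\Delta_P$, and $C_P\cap\overline{JF}=\{W\in\overline{JF}:\Delta(W)=\Delta_P\}$, which is a cell of Piontkowski's affine cell decomposition of $\overline{JF}$.
   Context: Let $m,n$ be coprime positive integers, $\delta=\frac{(m-1)(n-1)}2$, $R=\mathbb{C}[[t^n,t^m]]\subset\mathbb{C}[[t]]$, and $V=\mathbb{C}[[t]]/t^{2\delta}\mathbb{C}[[t]]$, with filtration $V=V_{2\delta}\supset V_{2\delta-1}\supset\dots\supset V_0=0$, $V_i=t^{2\delta-i}V$. The Jacobi factor $\overline{JF}\subset Gr(\delta,V)$ is the subvariety of $\delta$-dimensional subspaces $W\subset V$ invariant under multiplication by $R$ (equivalently, $R$-submodules $M\subset\mathbb{C}[[t]]$ containing $t^{2\delta}\mathbb{C}[[t]]$ of codimension $\delta$). For a Young diagram $P$ in a $\delta\times\delta$ square with rows $p_1\le\dots\le p_\delta$, the Schubert cell $C_P$ is the set of $W\in Gr(\delta,V)$ with $\dim(W\cap V_i)=\#\{j: p_j+j\le i\}$ for all $i$. For $W\subset V$ set $\Delta(W)=\{d\in\mathbb{Z}: \exists p\in W,\ p\in V_{2\delta-d}\setminus V_{2\delta-d-1}\}\cup[2\delta,\infty)$ (the set of $t$-adic orders of elements of $W$, together with all integers $\ge2\delta$).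 Piontkowski's cell decomposition of $\overline{JF}$ has cells $\{W\in\overline{JF}:\Delta(W)=\Delta\}$, each an affine space. A Young diagram is a $p$-core if none of its boxes has hook length equal to $p$. *)

theory Defs
  imports "HOL-Computational_Algebra.Formal_Power_Series"
begin

text \<open>Elements of C[[t]] are complex formal power series. V = C[[t]]/t^N is represented
  by the power series whose coefficients vanish from degree N on (N = 2 delta).\<close>

definition delta :: "nat \<Rightarrow> nat \<Rightarrow> nat" where
  "delta m n = ((m - 1) * (n - 1)) div 2"

definition Vsp :: "nat \<Rightarrow> complex fps set" where
  "Vsp N = {f. \<forall>i\<ge>N. fps_nth f i = 0}"

definition Vfilt :: "nat \<Rightarrow> nat \<Rightarrow> complex fps set" where
  "Vfilt N i = {f \<in> Vsp N. \<forall>j < N - i. fps_nth f j = 0}"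

definition fscale :: "complex \<Rightarrow> complex fps \<Rightarrow> complex fps" where
  "fscale c f = fps_const c * f"

definition fdim :: "complex fps set \<Rightarrow> nat" where
  "fdim W = vector_space.dim fscale W"

definition Grass :: "nat \<Rightarrow> nat \<Rightarrow> complex fps set set" where
  "Grass N k = {W. W \<subseteq> Vsp N \<and> module.subspace fscale W \<and> fdim W = k}"

text \<open>R = C[[t^n, t^m]]: power series whose exponents lie in the semigroup generated by m, n.\<close>
definition semigroup_ring :: "nat \<Rightarrow> nat \<Rightarrow> complex fps set" where
  "semigroup_ring m n = {r. \<forall>k. fps_nth r k \<noteq> 0 \<longrightarrow> (\<exists>a b. k = a * m + b * n)}"

text \<open>Jacobi factor: delta-dimensional subspaces of V invariant under multiplication by R
  (multiplication taken in V = C[[t]]/t^(2 delta), i.e. truncated).\<close>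
definition JF :: "nat \<Rightarrow> nat \<Rightarrow> complex fps set set" where
  "JF m n = {W \<in> Grass (2 * delta m n) (delta m n).
     \<forall>r \<in> semigroup_ring m n. \<forall>w \<in> W. fps_cutoff (2 * delta m n) (r * w) \<in> W}"

definition DeltaW :: "nat \<Rightarrow> complex fps set \<Rightarrow> nat set" where
  "DeltaW N W = {d. \<exists>p \<in> W. p \<noteq> 0 \<and> subdegree p = d} \<union> {N..}"

text \<open>Young diagram in a k x k square given by rows p 1 \<le> ... \<le> p k (values of p outside
  1..k are irrelevant).\<close>
definition young_in_square :: "nat \<Rightarrow> (nat \<Rightarrow> nat) \<Rightarrow> bool" where
  "young_in_square k p \<longleftrightarrow>
     (\<forall>i j. 1 \<le> i \<longrightarrow> i \<le> j \<longrightarrow> j \<le> k \<longrightarrow> p i \<le> p j) \<and> (\<forall>j\<in>{1..k}. p j \<le> k)"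

text \<open>Hook length of the box in row j, column c (1 \<le> c \<le> p j): arm = p j - c,
  leg = number of rows of length \<ge> c lying beyond row j (the rows j' < j,
  since the rows are listed in increasing order).\<close>
definition hook_length :: "(nat \<Rightarrow> nat) \<Rightarrow> nat \<Rightarrow> nat \<Rightarrow> nat" where
  "hook_length p j c = (p j - c) + card {j'. 1 \<le> j' \<and> j' < j \<and> c \<le> p j'} + 1"

definition is_core :: "nat \<Rightarrow> nat \<Rightarrow> (nat \<Rightarrow> nat) \<Rightarrow> bool" where
  "is_core k q p \<longleftrightarrow> (\<forall>j\<in>{1..k}. \<forall>c\<in>{1..p j}. hook_length p j c \<noteq> q)"

definition schubert_cell :: "nat \<Rightarrow> nat \<Rightarrow> (nat \<Rightarrow> nat) \<Rightarrow> complex fps set set" where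
  "schubert_cell N k p = {W \<in> Grass N k.
     \<forall>i \<le> N. fdim (W \<inter> Vfilt N i) = card {j \<in> {1..k}. p j + j \<le> i}}"

end

theory Submission
  imports Defs
begin
unbundle fps_syntax


interpretation F: vector_space fscale
  by unfold_locales (auto simp: fscale_def algebra_simps simp flip: fps_const_add fps_const_mult)

lemma fscale_nth[simp]: "fscale c f $ i = c * f $ i"
  by (simp add: fscale_def)

lemma fdim_F: "fdim W = F.dim W" by (simp add: fdim_def)

definition ords :: "complex fps set \<Rightarrow> nat set" where
  "ords W = {d. \<exists>f\<in>W. f \<noteq> 0 \<and> subdegree f = d}"

lemma low_zero_subspace: "F.subspace {f. \<forall>i\<le>d. f $ i = 0}"
  unfolding F.subspace_def by auto

lemma indep_distinct:
  assumes "finite D" "\<And>d. d \<in> D \<Longrightarrow> e d \<noteq> 0 \<and> subdegree (e d) = d"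
  shows "F.independent (e ` D)"
  using assms
proof (induction D rule: finite_linorder_min_induct)
  case empty then show ?case by (simp add: F.independent_empty)
next
  case (insert b A)
  have IH: "F.independent (e ` A)" using insert by auto
  have sub: "e ` A \<subseteq> {f. \<forall>i\<le>b. f $ i = 0}"
  proof
    fix f assume "f \<in> e ` A"
    then obtain a where a: "a \<in> A" "f = e a" by auto
    then have "b < subdegree f" using insert by auto
    then show "f \<in> {f. \<forall>i\<le>b. f $ i = 0}" by (auto intro!: nth_less_subdegree_zero)
  qed
  have "F.span (e ` A) \<subseteq> {f. \<forall>i\<le>b. f $ i = 0}"
    by (rule F.span_minimal[OF sub low_zero_subspace])
  moreover have "e b $ b \<noteq> 0" using insert.prems[of b]
    by (metis insertI1 nth_subdegree_nonzero)
  ultimately have "e b \<notin> F.span (e ` A)" by auto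
  then show ?case using IH by (simp add: F.independent_insertI)
qed

lemma dim_ords:
  assumes sub: "F.subspace U" and UV: "U \<subseteq> Vsp N"
  shows "ords U \<subseteq> {..<N} \<and> F.dim U = card (ords U)"
proof -
  have oN: "ords U \<subseteq> {..<N}"
  proof
    fix d assume "d \<in> ords U"
    then obtain f where f: "f \<in> U" "f \<noteq> 0" "subdegree f = d" by (auto simp: ords_def)
    then have "f $ d \<noteq> 0" by auto
    with f UV show "d \<in> {..<N}" unfolding Vsp_def by (metis (mono_tags) lessThan_iff mem_Collect_eq not_less subsetD)
  qed
  define e where "e d = (SOME f. f \<in> U \<and> f \<noteq> 0 \<and> subdegree f = d)" for d
  have e: "e d \<in> U \<and> e d \<noteq> 0 \<and> subdegree (e d) = d" if dO0: "d \<in> ords U" for d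
  proof -
    obtain f where "f \<in> U \<and> f \<noteq> 0 \<and> subdegree f = d" using dO0 unfolding ords_def by blast
    then show ?thesis unfolding e_def by (rule someI)
  qed
  have fin: "finite (ords U)" using oN finite_subset by blast
  have ind: "F.independent (e ` ords U)" by (rule indep_distinct[OF fin]) (use e in auto)
  have inj: "inj_on e (ords U)" by (metis e inj_onI)
  have BU: "e ` ords U \<subseteq> U" using e by auto
  have span: "f \<in> F.span (e ` ords U)" if "f \<in> U" for f
    using that
  proof (induction "N - subdegree f" arbitrary: f rule: less_induct)
    case less
    show ?case
    proof (cases "f = 0")
      case True then show ?thesis by (simp add: F.span_zero)
    next
      case False
      define d where "d = subdegree f"
      have dO: "d \<in> ords U" using less.prems False d_def by (auto simp: ords_def)
      have dN: "d < N" using dO oN by auto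
      have ed: "e d $ d \<noteq> 0" using e[OF dO] by (metis nth_subdegree_nonzero)
      define g where "g = f - fscale (f $ d / e d $ d) (e d)"
      have gU: "g \<in> U" unfolding g_def using F.subspace_diff[OF sub] F.subspace_scale[OF sub] less.prems e[OF dO] by auto
      have gspan: "g \<in> F.span (e ` ords U)"
      proof (cases "g = 0")
        case True then show ?thesis by (simp add: F.span_zero)
      next
        case False
        have "\<And>i. i \<le> d \<Longrightarrow> g $ i = 0"
        proof -
          fix i assume "i \<le> d"
          show "g $ i = 0"
          proof (cases "i = d")
            case True then show ?thesis using ed by (simp add: g_def)
          next
            case False
            then have "i < d" using \<open>i \<le> d\<close> by simp
            then have "f $ i = 0" "e d $ i = 0" using e[OF dO] d_def by (auto intro!: nth_less_subdegree_zero)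
            then show ?thesis by (simp add: g_def)
          qed
        qed
        then have "d < subdegree g" using False by (intro subdegree_greaterI) auto
        then have "N - subdegree g < N - subdegree f" using dN d_def by auto
        then show ?thesis using less.hyps gU by blast
      qed
      have "f = g + fscale (f $ d / e d $ d) (e d)" by (simp add: g_def)
      also have "\<dots> \<in> F.span (e ` ords U)"
        by (intro F.span_add gspan F.span_scale F.span_base) (use dO in auto)
      finally show ?thesis .
    qed
  qed
  have "F.dim U = card (e ` ords U)"
    by (rule F.dim_unique[OF BU _ ind refl]) (use span in auto)
  with inj oN show ?thesis by (simp add: card_image)
qed



lemma young_mono: "young_in_square k p \<Longrightarrow> 1 \<le> i \<Longrightarrow> i \<le> j \<Longrightarrow> j \<le> k \<Longrightarrow> p i \<le> p j"
  unfolding young_in_square_def by blast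

lemma downset_exists:
  fixes k :: nat
  assumes "\<And>j j'. j \<in> {1..k} \<Longrightarrow> P j \<Longrightarrow> 1 \<le> j' \<Longrightarrow> j' \<le> j \<Longrightarrow> P j'"
  shows "\<exists>i\<le>k. \<forall>j\<in>{1..k}. P j \<longleftrightarrow> j \<le> i"
proof -
  define S where "S = insert 0 {j\<in>{1..k}. P j}"
  have fin: "finite S" unfolding S_def by auto
  define i where "i = Max S"
  have iS: "i \<in> S" unfolding i_def using fin S_def by (intro Max_in) auto
  have "i \<le> k" using iS unfolding S_def by auto
  moreover have "P j \<longleftrightarrow> j \<le> i" if "j \<in> {1..k}" for j
  proof
    assume "P j" then have "j \<in> S" using that S_def by auto
    then show "j \<le> i" unfolding i_def using fin by simp
  next
    assume "j \<le> i"
    then have "i \<noteq> 0" using that by auto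
    then have "i \<in> {1..k}" "P i" using iS S_def by auto
    then show "P j" using assms \<open>j \<le> i\<close> that by auto
  qed
  ultimately show ?thesis by blast
qed

lemma hook_formula:
  assumes y: "young_in_square k p" and j: "j \<in> {1..k}" and c: "1 \<le> c" "c \<le> p j"
    and i: "\<forall>j'\<in>{1..k}. (p j' < c \<longleftrightarrow> j' \<le> i)"
  shows "i < j \<and> hook_length p j c = p j + j - c - i"
proof -
  have ij: "i < j"
  proof (rule ccontr)
    assume "\<not> i < j" then have "p j < c" using i j by auto
    then show False using c by simp
  qed
  have "{j'. 1 \<le> j' \<and> j' < j \<and> c \<le> p j'} = {i+1..<j}"
  proof (intro set_eqI iffI)
    fix x assume "x \<in> {j'. 1 \<le> j' \<and> j' < j \<and> c \<le> p j'}"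
    then have "x \<in> {1..k}" "c \<le> p x" "x < j" using j by auto
    then have "\<not> x \<le> i" using i \<open>x \<in> {1..k}\<close> by (meson not_less)
    then show "x \<in> {i+1..<j}" using \<open>x < j\<close> by auto
  next
    fix x assume "x \<in> {i+1..<j}"
    then have "x \<in> {1..k}" "\<not> x \<le> i" "x < j" using j by auto
    then show "x \<in> {j'. 1 \<le> j' \<and> j' < j \<and> c \<le> p j'}" using i by force
  qed
  then have "card {j'. 1 \<le> j' \<and> j' < j \<and> c \<le> p j'} = j - (i+1)" by simp
  then show ?thesis using ij c unfolding hook_length_def by simp
qed

lemma strict_beads:
  assumes "young_in_square k p" "j \<in> {1..k}" "j' \<in> {1..k}" "j < j'"
  shows "p j + j < p j' + j'"
  using young_mono[OF assms(1), of j j'] assms by auto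

lemma core_iff:
  assumes y: "young_in_square k p" and q: "0 < q"
  shows "is_core k q p \<longleftrightarrow> (\<forall>j\<in>{1..k}. q < p j + j \<longrightarrow> (\<exists>j'\<in>{1..k}. p j' + j' + q = p j + j))"
proof
  assume core: "is_core k q p"
  show "\<forall>j\<in>{1..k}. q < p j + j \<longrightarrow> (\<exists>j'\<in>{1..k}. p j' + j' + q = p j + j)"
  proof (intro ballI impI, rule ccontr)
    fix j assume j: "j \<in> {1..k}" and qj: "q < p j + j"
      and nb: "\<not> (\<exists>j'\<in>{1..k}. p j' + j' + q = p j + j)"
    define yy where "yy = p j + j - q"
    have "\<exists>i\<le>k. \<forall>j'\<in>{1..k}. (p j' + j' < yy) \<longleftrightarrow> j' \<le> i"
    proof (rule downset_exists)
      fix a b assume "a \<in> {1..k}" "p a + a < yy" "1 \<le> b" "b \<le> a"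
      then show "p b + b < yy" using young_mono[OF y, of b a] by auto
    qed
    then obtain i where ik: "i \<le> k" and iP: "\<forall>j'\<in>{1..k}. (p j' + j' < yy) \<longleftrightarrow> j' \<le> i" by blast
    have ij: "i < j"
    proof (rule ccontr)
      assume "\<not> i < j" then have "p j + j < yy" using iP j by auto
      then show False using yy_def q by auto
    qed
    have iy: "i < yy"
    proof (cases "i = 0")
      case True then show ?thesis using yy_def qj by auto
    next
      case False then have "i \<in> {1..k}" using ik by auto
      then have "p i + i < yy" using iP by auto
      then show ?thesis by auto
    qed
    define c where "c = yy - i"
    have i1: "i + 1 \<in> {1..k}" using ij j by auto
    have "\<not> (p (i+1) + (i+1) < yy)"
    proof
      assume "p (i+1) + (i+1) < yy"
      then have "i + 1 \<le> i" using iP i1 by blast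
      then show False by simp
    qed
    moreover have "p (i+1) + (i+1) \<noteq> yy" using nb i1 yy_def qj by force
    ultimately have "c \<le> p (i+1)" unfolding c_def by auto
    also have "p (i+1) \<le> p j" using young_mono[OF y, of "i+1" j] ij j by auto
    finally have cpj: "c \<le> p j" .
    have c1: "1 \<le> c" using iy c_def by auto
    have cprop: "\<forall>j'\<in>{1..k}. (p j' < c \<longleftrightarrow> j' \<le> i)"
    proof
      fix j' assume j': "j' \<in> {1..k}"
      show "p j' < c \<longleftrightarrow> j' \<le> i"
      proof
        assume "p j' < c"
        show "j' \<le> i"
        proof (rule ccontr)
          assume "\<not> j' \<le> i"
          then have "p (i+1) \<le> p j'" using young_mono[OF y, of "i+1" j'] j' by auto
          then show False using \<open>c \<le> p (i+1)\<close> \<open>p j' < c\<close> by auto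
        qed
      next
        assume "j' \<le> i"
        then have "i \<in> {1..k}" using j' ik by auto
        then have "p i + i < yy" using iP by auto
        moreover have "p j' \<le> p i" using young_mono[OF y, of j' i] j' \<open>j' \<le> i\<close> ik by auto
        ultimately show "p j' < c" unfolding c_def by auto
      qed
    qed
    have "hook_length p j c = p j + j - c - i" using hook_formula[OF y j c1 cpj cprop] by auto
    also have "\<dots> = q" using c_def yy_def qj iy by auto
    finally show False using core j c1 cpj unfolding is_core_def by auto
  qed
next
  assume R: "\<forall>j\<in>{1..k}. q < p j + j \<longrightarrow> (\<exists>j'\<in>{1..k}. p j' + j' + q = p j + j)"
  show "is_core k q p" unfolding is_core_def
  proof (intro ballI notI)
    fix j c assume j: "j \<in> {1..k}" and c: "c \<in> {1..p j}" and h: "hook_length p j c = q"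
    have "\<exists>i\<le>k. \<forall>j'\<in>{1..k}. (p j' < c) \<longleftrightarrow> j' \<le> i"
    proof (rule downset_exists)
      fix a b assume "a \<in> {1..k}" "p a < c" "1 \<le> b" "b \<le> a"
      then show "p b < c" using young_mono[OF y, of b a] by auto
    qed
    then obtain i where ik: "i \<le> k" and iP: "\<forall>j'\<in>{1..k}. (p j' < c) \<longleftrightarrow> j' \<le> i" by blast
    have c1: "1 \<le> c" "c \<le> p j" using c by auto
    from hook_formula[OF y j c1 iP] h have ij: "i < j" and hq: "q = p j + j - c - i" by auto
    have "q < p j + j" using hq ij c1 q by auto
    then obtain j' where j': "j' \<in> {1..k}" "p j' + j' + q = p j + j" using R j by blast
    then have eq: "p j' + j' = c + i" using hq ij c1 by auto
    show False
    proof (cases "j' \<le> i")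
      case True then have "p j' < c" using iP j' by auto
      then show False using eq True by auto
    next
      case False then have "c \<le> p j'" using iP j' by auto
      then show False using eq False by auto
    qed
  qed
qed



definition Tset :: "nat \<Rightarrow> nat \<Rightarrow> (nat \<Rightarrow> nat) \<Rightarrow> nat set" where
  "Tset N k p = (\<lambda>j. N - (p j + j)) ` {1..k}"

definition clos :: "nat \<Rightarrow> nat set \<Rightarrow> nat \<Rightarrow> bool" where
  "clos N A q \<longleftrightarrow> (\<forall>t\<in>A. t + q < N \<longrightarrow> t + q \<in> A)"

lemma bead_bounds:
  assumes y: "young_in_square k p" and j: "j \<in> {1..k}"
  shows "1 \<le> p j + j \<and> p j + j \<le> 2 * k"
proof -
  have "p j \<le> k" using y j unfolding young_in_square_def by blast
  then show ?thesis using j by auto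
qed

lemma T_inj:
  assumes y: "young_in_square k p"
  shows "inj_on (\<lambda>j. 2*k - (p j + j)) {1..k}"
proof (rule inj_onI)
  fix a b assume a: "a \<in> {1..k}" and b: "b \<in> {1..k}" and e: "2*k - (p a + a) = 2*k - (p b + b)"
  have "p a + a = p b + b" using e bead_bounds[OF y a] bead_bounds[OF y b] by auto
  then show "a = b" using strict_beads[OF y a b] strict_beads[OF y b a] by (metis less_irrefl nat_neq_iff)
qed

lemma T_props:
  assumes y: "young_in_square k p"
  shows "Tset (2*k) k p \<subseteq> {..<2*k} \<and> card (Tset (2*k) k p) = k"
proof -
  have "Tset (2*k) k p \<subseteq> {..<2*k}" unfolding Tset_def using bead_bounds[OF y] by force
  moreover have "card (Tset (2*k) k p) = k" unfolding Tset_def using card_image[OF T_inj[OF y]] by simp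
  ultimately show ?thesis by blast
qed

lemma T_count:
  assumes y: "young_in_square k p" and i: "i \<le> 2*k"
  shows "card {j\<in>{1..k}. p j + j \<le> i} = card {d\<in>Tset (2*k) k p. 2*k - i \<le> d}"
proof -
  have "{d\<in>Tset (2*k) k p. 2*k - i \<le> d} = (\<lambda>j. 2*k - (p j + j)) ` {j\<in>{1..k}. p j + j \<le> i}"
  proof (intro set_eqI iffI)
    fix d assume "d \<in> {d\<in>Tset (2*k) k p. 2*k - i \<le> d}"
    then obtain j where j: "j \<in> {1..k}" "d = 2*k - (p j + j)" "2*k - i \<le> d" unfolding Tset_def by auto
    then have "p j + j \<le> i" using bead_bounds[OF y j(1)] i by auto
    then show "d \<in> (\<lambda>j. 2*k - (p j + j)) ` {j\<in>{1..k}. p j + j \<le> i}" using j by auto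
  next
    fix d assume "d \<in> (\<lambda>j. 2*k - (p j + j)) ` {j\<in>{1..k}. p j + j \<le> i}"
    then obtain j where j: "j \<in> {1..k}" "d = 2*k - (p j + j)" "p j + j \<le> i" by auto
    then show "d \<in> {d\<in>Tset (2*k) k p. 2*k - i \<le> d}" unfolding Tset_def using i by auto
  qed
  moreover have "inj_on (\<lambda>j. 2*k - (p j + j)) {j\<in>{1..k}. p j + j \<le> i}"
    using T_inj[OF y] by (rule inj_on_subset) auto
  ultimately show ?thesis by (simp add: card_image)
qed

lemma T_clos:
  assumes y: "young_in_square k p" and q: "0 < q"
  shows "clos (2*k) (Tset (2*k) k p) q \<longleftrightarrow> is_core k q p"
proof -
  have "clos (2*k) (Tset (2*k) k p) q \<longleftrightarrow>
     (\<forall>j\<in>{1..k}. q < p j + j \<longrightarrow> (\<exists>j'\<in>{1..k}. p j' + j' + q = p j + j))"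
  proof -
    have "(2*k - (p j + j) + q < 2*k \<longrightarrow> 2*k - (p j + j) + q \<in> Tset (2*k) k p) \<longleftrightarrow>
          (q < p j + j \<longrightarrow> (\<exists>j'\<in>{1..k}. p j' + j' + q = p j + j))" if j: "j \<in> {1..k}" for j
    proof -
      have bj: "1 \<le> p j + j" "p j + j \<le> 2*k" using bead_bounds[OF y j] by auto
      have "2*k - (p j + j) + q \<in> Tset (2*k) k p \<longleftrightarrow> (\<exists>j'\<in>{1..k}. p j' + j' + q = p j + j)"
        if "q < p j + j"
      proof
        assume "2*k - (p j + j) + q \<in> Tset (2*k) k p"
        then obtain j' where j': "j' \<in> {1..k}" "2*k - (p j + j) + q = 2*k - (p j' + j')" unfolding Tset_def by auto
        then show "\<exists>j'\<in>{1..k}. p j' + j' + q = p j + j" using bead_bounds[OF y j'(1)] bj that by (intro bexI[of _ j']) auto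
      next
        assume "\<exists>j'\<in>{1..k}. p j' + j' + q = p j + j"
        then obtain j' where j': "j' \<in> {1..k}" "p j' + j' + q = p j + j" by auto
        then have "2*k - (p j + j) + q = 2*k - (p j' + j')" using bj by auto
        then show "2*k - (p j + j) + q \<in> Tset (2*k) k p" unfolding Tset_def using j' by auto
      qed
      moreover have "2*k - (p j + j) + q < 2*k \<longleftrightarrow> q < p j + j" using bj by auto
      ultimately show ?thesis by blast
    qed
    then show ?thesis unfolding clos_def Tset_def by auto
  qed
  also have "\<dots> \<longleftrightarrow> is_core k q p" using core_iff[OF y q] by simp
  finally show ?thesis .
qed

lemma count_eq:
  fixes A B :: "nat set"
  assumes A: "A \<subseteq> {..<N}" and B: "B \<subseteq> {..<N}"
    and c: "\<forall>i\<le>N. card {d\<in>A. N - i \<le> d} = card {d\<in>B. N - i \<le> d}"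
  shows "A = B"
proof -
  have fA: "finite A" "finite B" using A B finite_subset by auto
  have ge: "\<forall>t\<le>N. card {d\<in>A. t \<le> d} = card {d\<in>B. t \<le> d}"
  proof (intro allI impI)
    fix t assume "t \<le> N"
    then show "card {d\<in>A. t \<le> d} = card {d\<in>B. t \<le> d}" using c[rule_format, of "N - t"] by auto
  qed
  have split: "card {d\<in>X. t \<le> d} = (if t \<in> X then Suc (card {d\<in>X. Suc t \<le> d}) else card {d\<in>X. Suc t \<le> d})"
    if "finite X" for X :: "nat set" and t
  proof -
    have "{d\<in>X. t \<le> d} = (if t \<in> X then insert t {d\<in>X. Suc t \<le> d} else {d\<in>X. Suc t \<le> d})"
      by (auto simp: le_eq_less_or_eq Suc_le_eq)
    then show ?thesis using that by auto
  qed
  have "t \<in> A \<longleftrightarrow> t \<in> B" for t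
  proof (cases "t < N")
    case True
    have "card {d\<in>A. t \<le> d} = card {d\<in>B. t \<le> d}" "card {d\<in>A. Suc t \<le> d} = card {d\<in>B. Suc t \<le> d}"
      using ge True by auto
    then show ?thesis using split[OF fA(1), of t] split[OF fA(2), of t] by (auto split: if_splits)
  next
    case False then show ?thesis using A B by auto
  qed
  then show ?thesis by auto
qed

lemma Vfilt_subspace: "F.subspace (Vfilt N i)"
  unfolding F.subspace_def Vfilt_def Vsp_def by auto

lemma Vsp_subspace: "F.subspace (Vsp N)"
  unfolding F.subspace_def Vsp_def by auto

lemma ords_filt:
  assumes "W \<subseteq> Vsp N"
  shows "ords (W \<inter> Vfilt N i) = {d\<in>ords W. N - i \<le> d}"
proof (intro set_eqI iffI)
  fix d assume "d \<in> ords (W \<inter> Vfilt N i)"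
  then obtain f where f: "f \<in> W" "f \<in> Vfilt N i" "f \<noteq> 0" "subdegree f = d" unfolding ords_def by auto
  have "N - i \<le> subdegree f" using f by (intro subdegree_geI) (auto simp: Vfilt_def)
  then show "d \<in> {d\<in>ords W. N - i \<le> d}" using f unfolding ords_def by auto
next
  fix d assume "d \<in> {d\<in>ords W. N - i \<le> d}"
  then obtain f where f: "f \<in> W" "f \<noteq> 0" "subdegree f = d" "N - i \<le> d" unfolding ords_def by auto
  have "f \<in> Vfilt N i" using f assms unfolding Vfilt_def by (auto intro!: nth_less_subdegree_zero)
  then show "d \<in> ords (W \<inter> Vfilt N i)" using f unfolding ords_def by auto
qed

lemma schubert_iff:
  assumes y: "young_in_square k p" and W: "W \<in> Grass (2*k) k"
  shows "W \<in> schubert_cell (2*k) k p \<longleftrightarrow> ords W = Tset (2*k) k p"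
proof -
  have WV: "W \<subseteq> Vsp (2*k)" and sW: "F.subspace W" using W unfolding Grass_def by auto
  have dimi: "fdim (W \<inter> Vfilt (2*k) i) = card {d\<in>ords W. 2*k - i \<le> d}" for i
  proof -
    have "F.subspace (W \<inter> Vfilt (2*k) i)" using sW Vfilt_subspace by (rule F.subspace_inter)
    moreover have "W \<inter> Vfilt (2*k) i \<subseteq> Vsp (2*k)" using WV by auto
    ultimately show ?thesis using dim_ords ords_filt[OF WV] by (simp add: fdim_F)
  qed
  have oW: "ords W \<subseteq> {..<2*k}" using dim_ords[OF sW WV] by auto
  have "W \<in> schubert_cell (2*k) k p \<longleftrightarrow>
     (\<forall>i\<le>2*k. card {d\<in>ords W. 2*k - i \<le> d} = card {d\<in>Tset (2*k) k p. 2*k - i \<le> d})"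
    unfolding schubert_cell_def using W dimi T_count[OF y] by auto
  also have "\<dots> \<longleftrightarrow> ords W = Tset (2*k) k p"
    using count_eq[OF oW conjunct1[OF T_props[OF y]]] by auto
  finally show ?thesis .
qed



lemma JF_clos:
  assumes W: "W \<in> JF m n" and N: "N = 2 * delta m n"
  shows "clos N (ords W) m" "clos N (ords W) n"
proof -
  have inv: "\<forall>r\<in>semigroup_ring m n. \<forall>w\<in>W. fps_cutoff N (r * w) \<in> W" using W N unfolding JF_def by auto
  have gen: "clos N (ords W) q" if q: "fps_X ^ q \<in> semigroup_ring m n" for q
    unfolding clos_def
  proof (intro ballI impI)
    fix t assume t: "t \<in> ords W" "t + q < N"
    then obtain f where f: "f \<in> W" "f \<noteq> 0" "subdegree f = t" unfolding ords_def by auto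
    define g where "g = fps_cutoff N (fps_X ^ q * f)"
    have gW: "g \<in> W" using inv q f unfolding g_def by auto
    have g1: "g $ (t + q) \<noteq> 0" using t f unfolding g_def by (auto simp: fps_X_power_mult_nth)
    have g2: "g $ i = 0" if "i < t + q" for i
      using that f unfolding g_def by (auto simp: fps_X_power_mult_nth intro!: nth_less_subdegree_zero)
    have "g \<noteq> 0" using g1 by auto
    moreover have "subdegree g = t + q" using g1 g2 by (rule subdegreeI)
    ultimately show "t + q \<in> ords W" using gW unfolding ords_def by auto
  qed
  have "fps_X ^ m \<in> semigroup_ring m n" unfolding semigroup_ring_def
  proof (intro CollectI allI impI)
    fix k assume "(fps_X ^ m :: complex fps) $ k \<noteq> 0"
    then have "k = 1 * m + 0 * n" by (simp split: if_splits)
    then show "\<exists>a b. k = a * m + b * n" by blast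
  qed
  then show "clos N (ords W) m" by (rule gen)
  have "fps_X ^ n \<in> semigroup_ring m n" unfolding semigroup_ring_def
  proof (intro CollectI allI impI)
    fix k assume "(fps_X ^ n :: complex fps) $ k \<noteq> 0"
    then have "k = 0 * m + 1 * n" by (simp split: if_splits)
    then show "\<exists>a b. k = a * m + b * n" by blast
  qed
  then show "clos N (ords W) n" by (rule gen)
qed

definition Wm :: "nat \<Rightarrow> nat set \<Rightarrow> complex fps set" where
  "Wm N T = {f\<in>Vsp N. \<forall>i. f $ i \<noteq> 0 \<longrightarrow> i \<in> T}"

lemma Wm_subspace: "F.subspace (Wm N T)"
  unfolding F.subspace_def Wm_def Vsp_def by auto (metis add.left_neutral)

lemma Wm_ords:
  assumes "T \<subseteq> {..<N}"
  shows "ords (Wm N T) = T"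
proof (intro set_eqI iffI)
  fix d assume "d \<in> ords (Wm N T)"
  then obtain f where "f \<in> Wm N T" "f \<noteq> 0" "subdegree f = d" unfolding ords_def by auto
  then show "d \<in> T" unfolding Wm_def by (metis (mono_tags, lifting) mem_Collect_eq nth_subdegree_nonzero)
next
  fix d assume d: "d \<in> T"
  then have "fps_X ^ d \<in> Wm N T" using assms unfolding Wm_def Vsp_def by auto
  moreover have "(fps_X ^ d :: complex fps) \<noteq> 0" by simp
  ultimately show "d \<in> ords (Wm N T)" unfolding ords_def
    by (intro CollectI bexI[of _ "fps_X ^ d"]) (auto simp: fps_X_power_subdegree)
qed

lemma clos_mult:
  assumes "clos N T q" "t \<in> T" "t + a * q < N"
  shows "t + a * q \<in> T"
  using assms(3)
proof (induction a)
  case 0 then show ?case using assms(2) by simp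
next
  case (Suc a)
  then have "t + a * q \<in> T" by auto
  then show ?case using assms(1) Suc.prems unfolding clos_def by (metis add.assoc add.commute mult_Suc)
qed

lemma Wm_JF:
  assumes T: "T \<subseteq> {..<2 * delta m n}" "card T = delta m n"
    and cm: "clos (2 * delta m n) T m" and cn: "clos (2 * delta m n) T n"
  shows "Wm (2 * delta m n) T \<in> JF m n"
proof -
  let ?N = "2 * delta m n"
  have sub: "Wm ?N T \<subseteq> Vsp ?N" unfolding Wm_def by auto
  have "fdim (Wm ?N T) = delta m n"
    using dim_ords[OF Wm_subspace sub] Wm_ords[OF T(1)] T(2) by (simp add: fdim_F)
  then have G: "Wm ?N T \<in> Grass ?N (delta m n)" unfolding Grass_def using sub Wm_subspace by auto
  have "fps_cutoff ?N (r * w) \<in> Wm ?N T" if r: "r \<in> semigroup_ring m n" and w: "w \<in> Wm ?N T" for r w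
  proof -
    have "i \<in> T" if i: "fps_cutoff ?N (r * w) $ i \<noteq> 0" for i
    proof -
      have iN: "i < ?N" and s: "(\<Sum>a=0..i. r $ a * w $ (i - a)) \<noteq> 0"
        using i by (auto simp: fps_mult_nth split: if_splits)
      then obtain a where a: "a \<in> {0..i}" "r $ a * w $ (i - a) \<noteq> 0"
        by (meson sum.not_neutral_contains_not_neutral)
      then have "r $ a \<noteq> 0" "w $ (i - a) \<noteq> 0" by auto
      then obtain x y where xy: "a = x * m + y * n" and ia: "i - a \<in> T"
        using r w unfolding semigroup_ring_def Wm_def by blast
      have "i - a + x * m \<in> T" using clos_mult[OF cm ia, of x] a iN xy by auto
      then have "i - a + x * m + y * n \<in> T" using clos_mult[OF cn, of "i - a + x * m" y] a iN xy by auto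
      then show "i \<in> T" using a xy by auto
    qed
    then show ?thesis unfolding Wm_def Vsp_def by auto
  qed
  then show ?thesis using G unfolding JF_def by auto
qed

lemma DeltaW_ords: "DeltaW N W = ords W \<union> {N..}"
  unfolding DeltaW_def ords_def by auto

theorem mainTheorem4:
  fixes m n :: nat and p :: "nat \<Rightarrow> nat"
  assumes "0 < m" and "0 < n" and "coprime m n"
    and "young_in_square (delta m n) p"
  shows "(schubert_cell (2 * delta m n) (delta m n) p \<inter> JF m n \<noteq> {}
            \<longleftrightarrow> is_core (delta m n) m p \<and> is_core (delta m n) n p)
       \<and> (is_core (delta m n) m p \<and> is_core (delta m n) n p \<longrightarrow>
            (\<exists>D. (\<forall>W \<in> schubert_cell (2 * delta m n) (delta m n) p.
                      DeltaW (2 * delta m n) W = D)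
               \<and> schubert_cell (2 * delta m n) (delta m n) p \<inter> JF m n
                   = {W \<in> JF m n. DeltaW (2 * delta m n) W = D}))"
proof -
  define k where "k = delta m n"
  define T where "T = Tset (2*k) k p"
  have y: "young_in_square k p" using assms k_def by simp
  have TP: "T \<subseteq> {..<2*k}" "card T = k" using T_props[OF y] T_def by auto
  have JG: "W \<in> Grass (2*k) k" if "W \<in> JF m n" for W using that k_def unfolding JF_def by auto
  have oW: "ords W \<subseteq> {..<2*k}" if "W \<in> Grass (2*k) k" for W
    using that dim_ords unfolding Grass_def by blast
  have SC: "W \<in> schubert_cell (2*k) k p \<longleftrightarrow> W \<in> Grass (2*k) k \<and> ords W = T" for W
    using schubert_iff[OF y] T_def unfolding schubert_cell_def by blast
  have DT: "DeltaW (2*k) W = T \<union> {2*k..} \<longleftrightarrow> ords W = T" if "W \<in> Grass (2*k) k" for W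
  proof -
    have "ords W \<union> {2*k..} = T \<union> {2*k..} \<longleftrightarrow> ords W = T"
    proof
      assume e: "ords W \<union> {2*k..} = T \<union> {2*k..}"
      show "ords W = T"
      proof (intro set_eqI)
        fix x
        show "x \<in> ords W \<longleftrightarrow> x \<in> T"
          using e oW[OF that] TP(1) by (cases "x < 2*k") (auto simp: set_eq_iff)
      qed
    qed simp
    then show ?thesis by (simp add: DeltaW_ords)
  qed
  have cores: "clos (2*k) T m \<and> clos (2*k) T n \<longleftrightarrow> is_core k m p \<and> is_core k n p"
    using T_clos[OF y assms(1)] T_clos[OF y assms(2)] T_def by simp
  have part1: "schubert_cell (2*k) k p \<inter> JF m n \<noteq> {} \<longleftrightarrow> is_core k m p \<and> is_core k n p"
  proof
    assume "schubert_cell (2*k) k p \<inter> JF m n \<noteq> {}"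
    then obtain W where W: "W \<in> schubert_cell (2*k) k p" "W \<in> JF m n" by auto
    then have "ords W = T" using SC by auto
    then show "is_core k m p \<and> is_core k n p" using JF_clos[OF W(2)] k_def cores by auto
  next
    assume "is_core k m p \<and> is_core k n p"
    then have c: "clos (2*k) T m" "clos (2*k) T n" using cores by auto
    have J: "Wm (2*k) T \<in> JF m n" using Wm_JF[of T m n] TP c k_def by auto
    moreover have "ords (Wm (2*k) T) = T" using Wm_ords TP by auto
    ultimately have "Wm (2*k) T \<in> schubert_cell (2*k) k p" using SC JG by auto
    then show "schubert_cell (2*k) k p \<inter> JF m n \<noteq> {}" using J by auto
  qed
  have part2: "\<exists>D. (\<forall>W \<in> schubert_cell (2*k) k p. DeltaW (2*k) W = D)
               \<and> schubert_cell (2*k) k p \<inter> JF m n = {W \<in> JF m n. DeltaW (2*k) W = D}"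
  proof (intro exI[of _ "T \<union> {2*k..}"] conjI ballI)
    fix W assume "W \<in> schubert_cell (2*k) k p"
    then show "DeltaW (2*k) W = T \<union> {2*k..}" using SC DT by auto
  next
    show "schubert_cell (2*k) k p \<inter> JF m n = {W \<in> JF m n. DeltaW (2*k) W = T \<union> {2*k..}}"
      using SC DT JG by blast
  qed
  show ?thesis using part1 part2 k_def by simp
qed

end
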